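(* The function $\operatorname{FMet}^\circ \to \mathbb{R}$, $X \mapsto |X|$, is nowhere continuous: it is not continuous at any point of $\operatorname{FMet}^\circ$ (with respect to the Gromov--Hausdorff topology).
   Context: For a finite metric space $(X,d)$, its similarity matrix $Z_X$ is the $X\times X$ matrix with entries $Z_X(x,y)=e^{-d(x,y)}$. A weighting for $X$ is a vector $\mathbf{w}\in\mathbb{R}^X$ with $(Z_X\mathbf{w})(x)=1$ for all $x\in X$. If a weighting exists, $X$ is said to have magnitude, and the magnitude $|X|$ is the sum of the entries of a weighting (this is independent of the choice of weighting). $\operatorname{FMet}$ denotes the set of isometry classes of finite metric spaces equipped with the Gromov--Hausdorff metric, and $\operatorname{FMet}^\circ\subset\operatorname{FMet}$ is the subspace of those finite metric spaces which have magnitude. *)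

theory Defs
  imports Complex_Main
begin

definition is_metric_on :: "'a set \<Rightarrow> ('a \<Rightarrow> 'a \<Rightarrow> real) \<Rightarrow> bool" where
  "is_metric_on S d \<longleftrightarrow>
     (\<forall>x\<in>S. \<forall>y\<in>S. 0 \<le> d x y \<and> (d x y = 0 \<longleftrightarrow> x = y) \<and> d x y = d y x) \<and>
     (\<forall>x\<in>S. \<forall>y\<in>S. \<forall>z\<in>S. d x z \<le> d x y + d y z)"

definition fin_metric_space :: "'a set \<Rightarrow> ('a \<Rightarrow> 'a \<Rightarrow> real) \<Rightarrow> bool" where
  "fin_metric_space S d \<longleftrightarrow> finite S \<and> S \<noteq> {} \<and> is_metric_on S d"

definition weighting :: "'a set \<Rightarrow> ('a \<Rightarrow> 'a \<Rightarrow> real) \<Rightarrow> ('a \<Rightarrow> real) \<Rightarrow> bool" where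
  "weighting S d w \<longleftrightarrow> (\<forall>x\<in>S. (\<Sum>y\<in>S. exp (- d x y) * w y) = 1)"

definition has_magnitude :: "'a set \<Rightarrow> ('a \<Rightarrow> 'a \<Rightarrow> real) \<Rightarrow> bool" where
  "has_magnitude S d \<longleftrightarrow> (\<exists>w. weighting S d w)"

definition magnitude :: "'a set \<Rightarrow> ('a \<Rightarrow> 'a \<Rightarrow> real) \<Rightarrow> real" where
  "magnitude S d = (\<Sum>y\<in>S. (SOME w. weighting S d w) y)"

definition hausdorff_fin :: "('b \<Rightarrow> 'b \<Rightarrow> real) \<Rightarrow> 'b set \<Rightarrow> 'b set \<Rightarrow> real" where
  "hausdorff_fin D A B =
     max (Max ((\<lambda>a. Min ((\<lambda>b. D a b) ` B)) ` A)) (Max ((\<lambda>b. Min ((\<lambda>a. D a b) ` A)) ` B))"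

definition gh_dist :: "'a set \<Rightarrow> ('a \<Rightarrow> 'a \<Rightarrow> real) \<Rightarrow> 'c set \<Rightarrow> ('c \<Rightarrow> 'c \<Rightarrow> real) \<Rightarrow> real" where
  "gh_dist X dX Y dY = Inf {hausdorff_fin D (Inl ` X) (Inr ` Y) | D.
      is_metric_on (Inl ` X \<union> Inr ` Y) D \<and>
      (\<forall>x\<in>X. \<forall>x'\<in>X. D (Inl x) (Inl x') = dX x x') \<and>
      (\<forall>y\<in>Y. \<forall>y'\<in>Y. D (Inr y) (Inr y') = dY y y')}"

end

theory Submission
  imports Defs
begin

definition eY :: "nat set \<Rightarrow> (nat\<Rightarrow>nat\<Rightarrow>real) \<Rightarrow> nat \<Rightarrow> nat \<Rightarrow> real \<Rightarrow> nat \<Rightarrow> nat \<Rightarrow> real" where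
 "eY X d x0 N u y z = (if y \<in> X \<and> z \<in> X then d y z else if y \<in> X then d y x0 + u
    else if z \<in> X then d x0 z + u else if y = z then 0 else if N+2 \<le> y \<and> N+2 \<le> z then 2*u else u)"

lemma eY_metric:
  assumes m: "is_metric_on X d" and x0: "x0 \<in> X" and u: "u > 0"
  shows "is_metric_on (X \<union> Nw) (eY X d x0 N u)"
proof -
  have nn: "\<And>x y. x\<in>X \<Longrightarrow> y\<in>X \<Longrightarrow> 0 \<le> d x y" and sy: "\<And>x y. x\<in>X \<Longrightarrow> y\<in>X \<Longrightarrow> d x y = d y x"
   and z: "\<And>x y. x\<in>X \<Longrightarrow> y\<in>X \<Longrightarrow> d x y = 0 \<longleftrightarrow> x = y"
   and tr: "\<And>x y z. x\<in>X \<Longrightarrow> y\<in>X \<Longrightarrow> z\<in>X \<Longrightarrow> d x z \<le> d x y + d y z"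
    using m unfolding is_metric_on_def by blast+
  have bnd: "eY X d x0 N u y z \<le> 2*u" if "y \<notin> X" "z \<notin> X" for y z
    using that u by (auto simp: eY_def)
  have nn2: "0 \<le> eY X d x0 N u y z" if "y \<in> X \<union> Nw" "z \<in> X \<union> Nw" for y z
    using that u nn x0 by (auto simp: eY_def add_nonneg_pos less_imp_le)
  show ?thesis unfolding is_metric_on_def
  proof (intro conjI ballI)
    fix x y assume xy: "x \<in> X \<union> Nw" "y \<in> X \<union> Nw"
    show "0 \<le> eY X d x0 N u x y" using nn2 xy .
    show "(eY X d x0 N u x y = 0) = (x = y)"
    proof -
      have p1: "d x0 y + u \<noteq> 0" if "y \<in> X" for y using nn[OF x0 that] u by linarith
      have p2: "d y x0 + u \<noteq> 0" if "y \<in> X" for y using nn[OF that x0] u by linarith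
      show ?thesis using xy u p1 p2 z by (auto simp: eY_def)
    qed
    show "eY X d x0 N u x y = eY X d x0 N u y x"
      using xy sy x0 by (auto simp: eY_def)
  next
    fix x y z assume xyz: "x \<in> X \<union> Nw" "y \<in> X \<union> Nw" "z \<in> X \<union> Nw"
    show "eY X d x0 N u x z \<le> eY X d x0 N u x y + eY X d x0 N u y z"
    proof (cases "x \<in> X")
      case xX: True
      show ?thesis
      proof (cases "y \<in> X")
        case yX: True
        show ?thesis
        proof (cases "z \<in> X")
          case True then show ?thesis using xX yX tr by (simp add: eY_def)
        next
          case False then show ?thesis using xX yX tr[OF xX yX x0] by (simp add: eY_def)
        qed
      next
        case yN: False
        show ?thesis
        proof (cases "z \<in> X")
          case True then show ?thesis using xX yN tr[OF xX x0 True] u by (simp add: eY_def)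
        next
          case False then show ?thesis using xX yN nn2[of y z] xyz by (simp add: eY_def)
        qed
      qed
    next
      case xN: False
      show ?thesis
      proof (cases "y \<in> X")
        case yX: True
        show ?thesis
        proof (cases "z \<in> X")
          case True then show ?thesis using xN yX tr[OF x0 yX True] by (simp add: eY_def)
        next
          case False then show ?thesis using xN yX bnd[OF xN False] nn[OF x0 yX] nn[OF yX x0] by (simp add: eY_def)
        qed
      next
        case yN: False
        show ?thesis
        proof (cases "z \<in> X")
          case True then show ?thesis using xN yN nn2[of x y] xyz by (simp add: eY_def)
        next
          case zN: False 
          then show ?thesis using xN yN u by (auto simp: eY_def)
        qed
      qed
    qed
  qed
qed

lemma magnitude_eq:
  assumes fin: "finite S" and w: "weighting S d w" and sym: "\<forall>x\<in>S. \<forall>y\<in>S. d x y = d y x"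
  shows "magnitude S d = sum w S"
proof -
  define v where "v = (SOME w. weighting S d w)"
  have v: "weighting S d v" unfolding v_def using w by (metis someI)
  have "sum v S = (\<Sum>y\<in>S. v y * (\<Sum>z\<in>S. exp (- d y z) * w z))"
    using w unfolding weighting_def by simp
  also have "\<dots> = (\<Sum>y\<in>S. \<Sum>z\<in>S. w z * (exp (- d z y) * v y))"
    by (intro sum.cong refl) (auto simp: sum_distrib_left sym mult_ac intro!: sum.cong)
  also have "\<dots> = (\<Sum>z\<in>S. \<Sum>y\<in>S. w z * (exp (- d z y) * v y))"
    by (rule sum.swap)
  also have "\<dots> = (\<Sum>z\<in>S. w z * (\<Sum>y\<in>S. exp (- d z y) * v y))"
    by (simp add: sum_distrib_left)
  also have "\<dots> = sum w S"
    using v unfolding weighting_def by simp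
  finally show ?thesis unfolding magnitude_def v_def by simp
qed

definition WY :: "nat set \<Rightarrow> (nat \<Rightarrow> real) \<Rightarrow> nat \<Rightarrow> nat \<Rightarrow> real \<Rightarrow> real \<Rightarrow> nat \<Rightarrow> real" where
  "WY X w x0 N a b y = (if y \<in> X then w y + (if y = x0 then a - 1 else 0) else if N+2 \<le> y then b else a)"

lemma key_ab:
  fixes s :: real assumes "0 < s" "s < 1"
  defines "a \<equiv> (1-2*s)/((1-s)*(1+4*s))" and "b \<equiv> 1/((1-s)*(1+4*s))"
  shows "(a - 1) + s*(2*a+3*b) = 0" "a*(1+2*s) + 3*s*b = 1" "3*s*a + (1+2*s^2)*b = 1"
    "3*a+3*b = 6/(1+4*s)"
proof -
  define D where "D = (1-s)*(1+4*s)"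
  have ne: "D \<noteq> 0" using assms unfolding D_def by simp
  have aD: "a*D = 1-2*s" and bD: "b*D = 1" using ne unfolding a_def b_def D_def by auto
  have D: "D = 1 + 3*s - 4*s^2" unfolding D_def by (simp add: algebra_simps power2_eq_square)
  have "((a - 1) + s*(2*a+3*b))*D = a*D - D + 2*s*(a*D) + 3*s*(b*D)" by (simp add: algebra_simps)
  also have "\<dots> = 0" unfolding aD bD by (simp add: D algebra_simps power2_eq_square)
  finally show "(a - 1) + s*(2*a+3*b) = 0" using ne by simp
  have "(a*(1+2*s) + 3*s*b)*D = (a*D)*(1+2*s) + 3*s*(b*D)" by (simp add: algebra_simps)
  also have "\<dots> = D" unfolding aD bD by (simp add: D algebra_simps power2_eq_square)
  finally show "a*(1+2*s) + 3*s*b = 1" using ne by simp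
  have "(3*s*a + (1+2*s^2)*b)*D = 3*s*(a*D) + (1+2*s^2)*(b*D)" by (simp add: algebra_simps)
  also have "\<dots> = D" unfolding aD bD by (simp add: D algebra_simps power2_eq_square)
  finally show "3*s*a + (1+2*s^2)*b = 1" using ne by simp
  have "(3*a+3*b)*D = 3*(a*D)+3*(b*D)" by (simp add: algebra_simps)
  also have "\<dots> = 6*(1-s)" unfolding aD bD by simp
  finally have "(3*a+3*b)*D = 6*(1-s)" .
  then have "3*a+3*b = 6*(1-s)/D" using ne by (simp add: field_simps)
  also have "\<dots> = (1-s)*6/((1-s)*(1+4*s))" unfolding D_def by (simp add: mult.commute)
  also have "\<dots> = 6/(1+4*s)" using \<open>s < 1\<close> by (intro nonzero_mult_divide_mult_cancel_left) simp
  finally show "3*a+3*b = 6/(1+4*s)" .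
qed

lemma sumX_WY:
  assumes fin: "finite X" and w: "weighting X d w" and x0: "x0 \<in> X" and y: "y \<in> X"
  shows "(\<Sum>z\<in>X. exp (- d y z) * WY X w x0 N a b z) = 1 + exp (- d y x0) * (a - 1)"
proof -
  have "(\<Sum>z\<in>X. exp (- d y z) * WY X w x0 N a b z)
      = (\<Sum>z\<in>X. exp (- d y z) * w z + (if z = x0 then exp (- d y z) * (a - 1) else 0))"
    by (intro sum.cong refl) (auto simp: WY_def algebra_simps)
  also have "\<dots> = (\<Sum>z\<in>X. exp (- d y z) * w z) + exp (- d y x0) * (a - 1)"
    using fin x0 by (simp add: sum.distrib sum.delta')
  also have "(\<Sum>z\<in>X. exp (- d y z) * w z) = 1" using w y unfolding weighting_def by blast
  finally show ?thesis .
qed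

lemma Y_weighting:
  assumes fm: "fin_metric_space X d" and w: "weighting X d w" and x0: "x0 \<in> X" and u: "u > 0"
    and NX: "\<forall>n. N \<le> n \<longrightarrow> n \<notin> X"
  defines "s \<equiv> exp (- u)"
  defines "a \<equiv> (1-2*s)/((1-s)*(1+4*s))" and "b \<equiv> 1/((1-s)*(1+4*s))"
  defines "Nw \<equiv> {N, Suc N, N+2, N+3, N+4}"
  shows "weighting (X \<union> Nw) (eY X d x0 N u) (WY X w x0 N a b)"
    and "sum (WY X w x0 N a b) (X \<union> Nw) = sum w X + 6/(1+4*s) - 1"
proof -
  have fin: "finite X" using fm unfolding fin_metric_space_def by blast
  have d00: "d x0 x0 = 0" using fm x0 unfolding fin_metric_space_def is_metric_on_def by blast
  have s0: "0 < s" and s1: "s < 1" using u unfolding s_def by auto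
  note k = key_ab[OF s0 s1, folded a_def b_def]
  have e2: "exp (- (2*u)) = s^2" unfolding s_def by (simp add: power2_eq_square flip: exp_add)
  have nX: "N \<notin> X" "Suc N \<notin> X" "N+2 \<notin> X" "N+3 \<notin> X" "N+4 \<notin> X" using NX by auto
  have disj: "X \<inter> Nw = {}" using NX unfolding Nw_def by auto
  have finN: "finite Nw" unfolding Nw_def by simp
  let ?e = "eY X d x0 N u" and ?W = "WY X w x0 N a b"
  have split: "(\<Sum>z\<in>X \<union> Nw. f z) = (\<Sum>z\<in>X. f z) + (\<Sum>z\<in>Nw. f z)" for f :: "nat \<Rightarrow> real"
    by (rule sum.union_disjoint[OF fin finN disj])
  show "weighting (X \<union> Nw) ?e ?W" unfolding weighting_def
  proof
    fix y assume "y \<in> X \<union> Nw"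
    then consider (X) "y \<in> X" | (N) "y \<in> Nw" by blast
    then show "(\<Sum>z\<in>X \<union> Nw. exp (- ?e y z) * ?W z) = 1"
    proof cases
      case X
      have "(\<Sum>z\<in>X. exp (- ?e y z) * ?W z) = (\<Sum>z\<in>X. exp (- d y z) * ?W z)"
        using X by (intro sum.cong refl) (simp add: eY_def)
      also have "\<dots> = 1 + exp (- d y x0) * (a - 1)" using sumX_WY[OF fin w x0 X] .
      finally have A: "(\<Sum>z\<in>X. exp (- ?e y z) * ?W z) = 1 + exp (- d y x0) * (a - 1)" .
      have B0: "(\<Sum>z\<in>Nw. exp (- ?e y z) * ?W z) = exp (- (d y x0 + u)) * (2*a + 3*b)"
        using X nX unfolding Nw_def by (simp add: eY_def WY_def algebra_simps)
      have B1: "exp (- (d y x0 + u)) = exp (- d y x0) * s" using exp_add[of "- d y x0" "- u"] unfolding s_def by simp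
      have B: "(\<Sum>z\<in>Nw. exp (- ?e y z) * ?W z) = exp (- d y x0) * (s * (2*a + 3*b))"
        unfolding B0 B1 by simp
      have "exp (- d y x0) * (a - 1) + exp (- d y x0) * (s * (2*a + 3*b))
          = exp (- d y x0) * ((a - 1) + s * (2*a + 3*b))" by (simp only: distrib_left)
      also have "\<dots> = 0" using k(1) by simp
      finally show ?thesis unfolding split A B by simp
    next
      case N
      have nXy: "y \<notin> X" using N nX unfolding Nw_def by auto
      have "(\<Sum>z\<in>X. exp (- ?e y z) * ?W z) = (\<Sum>z\<in>X. s * (exp (- d x0 z) * ?W z))"
      proof (intro sum.cong refl)
        fix z assume "z \<in> X"
        have "exp (- (d x0 z + u)) = s * exp (- d x0 z)"
          using exp_add[of "- d x0 z" "- u"] unfolding s_def by (simp add: mult.commute)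
        then show "exp (- ?e y z) * ?W z = s * (exp (- d x0 z) * ?W z)"
          using nXy \<open>z \<in> X\<close> by (simp add: eY_def)
      qed
      also have "\<dots> = s * a" using sumX_WY[OF fin w x0 x0] d00 by (simp flip: sum_distrib_left)
      finally have A: "(\<Sum>z\<in>X. exp (- ?e y z) * ?W z) = s * a" .
      have C: "(\<Sum>z\<in>Nw. exp (- ?e y z) * ?W z) = 1 - s * a"
        using N nX k(2,3) e2 unfolding Nw_def s_def
        apply (elim insertE)
        by (simp_all add: eY_def WY_def algebra_simps power2_eq_square)
      show ?thesis unfolding split A C by simp
    qed
  qed
  have "sum ?W X = sum w X + (a - 1)"
  proof -
    have "sum ?W X = (\<Sum>z\<in>X. w z + (if z = x0 then a - 1 else 0))"
      by (intro sum.cong refl) (simp add: WY_def)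
    also have "\<dots> = sum w X + (a - 1)" using fin x0 by (simp add: sum.distrib sum.delta')
    finally show ?thesis .
  qed
  moreover have "sum ?W Nw = 2*a + 3*b" using nX unfolding Nw_def by (simp add: WY_def)
  ultimately show "sum ?W (X \<union> Nw) = sum w X + 6/(1+4*s) - 1" unfolding split using k(4) by simp
qed

definition DD :: "('a \<Rightarrow> 'a \<Rightarrow> real) \<Rightarrow> real \<Rightarrow> 'a + 'a \<Rightarrow> 'a + 'a \<Rightarrow> real" where
  "DD e r p q = e (case_sum id id p) (case_sum id id q) + (if isl p = isl q then 0 else r)"

lemma DD_metric:
  assumes em: "is_metric_on Y e" and XY: "X \<subseteq> Y" and r: "r > 0"
  shows "is_metric_on (Inl ` X \<union> Inr ` Y) (DD e r)"
proof -
  have nn: "\<And>x y. x\<in>Y \<Longrightarrow> y\<in>Y \<Longrightarrow> 0 \<le> e x y" and sy: "\<And>x y. x\<in>Y \<Longrightarrow> y\<in>Y \<Longrightarrow> e x y = e y x"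
   and z: "\<And>x y. x\<in>Y \<Longrightarrow> y\<in>Y \<Longrightarrow> e x y = 0 \<longleftrightarrow> x = y"
   and tr: "\<And>x y z. x\<in>Y \<Longrightarrow> y\<in>Y \<Longrightarrow> z\<in>Y \<Longrightarrow> e x z \<le> e x y + e y z"
    using em unfolding is_metric_on_def by blast+
  have pr: "case_sum id id p \<in> Y" if "p \<in> Inl ` X \<union> Inr ` Y" for p using that XY by auto
  show ?thesis unfolding is_metric_on_def
  proof (intro conjI ballI)
    fix p q assume p: "p \<in> Inl ` X \<union> Inr ` Y" and q: "q \<in> Inl ` X \<union> Inr ` Y"
    show "0 \<le> DD e r p q" using nn[OF pr[OF p] pr[OF q]] r by (simp add: DD_def)
    show "DD e r p q = DD e r q p" using sy[OF pr[OF p] pr[OF q]] by (simp add: DD_def eq_commute)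
    show "(DD e r p q = 0) = (p = q)"
    proof
      assume "DD e r p q = 0"
      then have "e (case_sum id id p) (case_sum id id q) = 0 \<and> isl p = isl q"
        using nn[OF pr[OF p] pr[OF q]] r unfolding DD_def by (auto split: if_splits)
      then show "p = q" using z[OF pr[OF p] pr[OF q]] by (cases p; cases q) auto
    next
      assume "p = q" then show "DD e r p q = 0" using z[OF pr[OF p] pr[OF p]] by (simp add: DD_def)
    qed
  next
    fix p q t assume p: "p \<in> Inl ` X \<union> Inr ` Y" and q: "q \<in> Inl ` X \<union> Inr ` Y"
      and t: "t \<in> Inl ` X \<union> Inr ` Y"
    have "e (case_sum id id p) (case_sum id id t) \<le> e (case_sum id id p) (case_sum id id q) + e (case_sum id id q) (case_sum id id t)"
      by (rule tr[OF pr[OF p] pr[OF q] pr[OF t]])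
    moreover have "(if isl p = isl t then 0 else r) \<le> (if isl p = isl q then 0 else r) + (if isl q = isl t then (0::real) else r)"
      using r by auto
    ultimately show "DD e r p t \<le> DD e r p q + DD e r q t" unfolding DD_def by linarith
  qed
qed

lemma gh_le:
  assumes fm: "fin_metric_space X d" and fY: "finite Y" and em: "is_metric_on Y e" and XY: "X \<subseteq> Y"
    and agree: "\<forall>x\<in>X. \<forall>x'\<in>X. e x x' = d x x'"
    and close: "\<forall>y\<in>Y. \<exists>x\<in>X. e x y \<le> c" and r: "r > 0" and c: "c \<ge> 0"
  shows "gh_dist X d Y e \<le> c + r"
proof -
  have fX: "finite X" and neX: "X \<noteq> {}" using fm unfolding fin_metric_space_def by auto
  have neY: "Y \<noteq> {}" using neX XY by auto
  let ?S = "{hausdorff_fin D (Inl ` X) (Inr ` Y) | D.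
      is_metric_on (Inl ` X \<union> Inr ` Y) D \<and>
      (\<forall>x\<in>X. \<forall>x'\<in>X. D (Inl x) (Inl x') = d x x') \<and>
      (\<forall>y\<in>Y. \<forall>y'\<in>Y. D (Inr y) (Inr y') = e y y')}"
  have eY0: "\<And>x y. x\<in>Y \<Longrightarrow> y\<in>Y \<Longrightarrow> 0 \<le> e x y" using em unfolding is_metric_on_def by blast
  have e00: "\<And>x. x\<in>Y \<Longrightarrow> e x x = 0" using em unfolding is_metric_on_def by blast
  have mem: "hausdorff_fin (DD e r) (Inl ` X) (Inr ` Y) \<in> ?S"
    using DD_metric[OF em XY r] agree by (auto simp: DD_def)
  have h1: "Max ((\<lambda>a. Min ((\<lambda>b. DD e r a b) ` Inr ` Y)) ` Inl ` X) \<le> c + r"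
  proof (rule Max.boundedI)
    show "finite ((\<lambda>a. Min ((\<lambda>b. DD e r a b) ` Inr ` Y)) ` Inl ` X)" using fX by simp
    show "(\<lambda>a. Min ((\<lambda>b. DD e r a b) ` Inr ` Y)) ` Inl ` X \<noteq> {}" using neX by simp
  next
    fix m assume "m \<in> (\<lambda>a. Min ((\<lambda>b. DD e r a b) ` Inr ` Y)) ` Inl ` X"
    then obtain x where x: "x \<in> X" and m: "m = Min ((\<lambda>b. DD e r (Inl x) b) ` Inr ` Y)" by auto
    have "m \<le> DD e r (Inl x) (Inr x)" unfolding m using fY x XY by (intro Min_le) auto
    also have "\<dots> = r" using e00[of x] x XY by (auto simp: DD_def)
    finally show "m \<le> c + r" using c by simp
  qed
  have h2: "Max ((\<lambda>b. Min ((\<lambda>a. DD e r a b) ` Inl ` X)) ` Inr ` Y) \<le> c + r"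
  proof (rule Max.boundedI)
    show "finite ((\<lambda>b. Min ((\<lambda>a. DD e r a b) ` Inl ` X)) ` Inr ` Y)" using fY by simp
    show "(\<lambda>b. Min ((\<lambda>a. DD e r a b) ` Inl ` X)) ` Inr ` Y \<noteq> {}" using neY by simp
  next
    fix m assume "m \<in> (\<lambda>b. Min ((\<lambda>a. DD e r a b) ` Inl ` X)) ` Inr ` Y"
    then obtain y where y: "y \<in> Y" and m: "m = Min ((\<lambda>a. DD e r a (Inr y)) ` Inl ` X)" by auto
    obtain x where x: "x \<in> X" and exy: "e x y \<le> c" using close y by blast
    have "m \<le> DD e r (Inl x) (Inr y)" unfolding m using fX x by (intro Min_le) auto
    also have "\<dots> = e x y + r" by (simp add: DD_def)
    finally show "m \<le> c + r" using exy by simp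
  qed
  have hle: "hausdorff_fin (DD e r) (Inl ` X) (Inr ` Y) \<le> c + r"
    unfolding hausdorff_fin_def using h1 h2 by simp
  have bdd: "bdd_below ?S"
  proof (rule bdd_belowI)
    fix h assume "h \<in> ?S"
    then obtain D where h: "h = hausdorff_fin D (Inl ` X) (Inr ` Y)"
      and D: "is_metric_on (Inl ` X \<union> Inr ` Y) D" by blast
    obtain x where x: "x \<in> X" using neX by blast
    have D0: "\<And>p q. p \<in> Inl ` X \<union> Inr ` Y \<Longrightarrow> q \<in> Inl ` X \<union> Inr ` Y \<Longrightarrow> 0 \<le> D p q"
      using D unfolding is_metric_on_def by blast
    have "0 \<le> Min ((\<lambda>b. D (Inl x) b) ` Inr ` Y)"
      using fY neY x D0 by (subst Min_ge_iff) auto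
    also have "\<dots> \<le> Max ((\<lambda>a. Min ((\<lambda>b. D a b) ` Inr ` Y)) ` Inl ` X)"
      using fX x by (intro Max_ge) auto
    finally show "0 \<le> h" unfolding h hausdorff_fin_def by simp
  qed
  have "gh_dist X d Y e = Inf ?S" unfolding gh_dist_def by simp
  also have "\<dots> \<le> hausdorff_fin (DD e r) (Inl ` X) (Inr ` Y)" by (rule cInf_lower[OF mem bdd])
  finally show ?thesis using hle by simp
qed

theorem theorem2p5:
  fixes X :: "nat set" and d :: "nat \<Rightarrow> nat \<Rightarrow> real"
  assumes "fin_metric_space X d" and "has_magnitude X d"
  shows "\<not> (\<forall>\<epsilon>>0. \<exists>\<delta>>0. \<forall>(Y::nat set) e.
            fin_metric_space Y e \<longrightarrow> has_magnitude Y e \<longrightarrow> gh_dist X d Y e < \<delta> \<longrightarrow>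
            \<bar>magnitude Y e - magnitude X d\<bar> < \<epsilon>)"
proof
  assume H: "\<forall>\<epsilon>>0. \<exists>\<delta>>0. \<forall>(Y::nat set) e.
            fin_metric_space Y e \<longrightarrow> has_magnitude Y e \<longrightarrow> gh_dist X d Y e < \<delta> \<longrightarrow>
            \<bar>magnitude Y e - magnitude X d\<bar> < \<epsilon>"
  obtain \<delta> where dpos: "\<delta> > 0" and Hd: "\<forall>(Y::nat set) e.
            fin_metric_space Y e \<longrightarrow> has_magnitude Y e \<longrightarrow> gh_dist X d Y e < \<delta> \<longrightarrow>
            \<bar>magnitude Y e - magnitude X d\<bar> < 1/5"
    using H[rule_format, of "1/5"] by auto
  have fm: "fin_metric_space X d" by fact
  have fX: "finite X" and neX: "X \<noteq> {}" and mX: "is_metric_on X d"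
    using fm unfolding fin_metric_space_def by auto
  obtain x0 where x0: "x0 \<in> X" using neX by blast
  define N where "N = Suc (Max X)"
  have NX: "\<forall>n. N \<le> n \<longrightarrow> n \<notin> X"
    using Max_ge[OF fX] unfolding N_def by (auto simp: not_less_eq_eq[symmetric])
  define w where "w = (SOME w. weighting X d w)"
  have w: "weighting X d w" unfolding w_def using assms(2) unfolding has_magnitude_def by (metis someI)
  have magX: "magnitude X d = sum w X" unfolding magnitude_def w_def ..
  define u where "u = \<delta> / 4"
  have u: "u > 0" using dpos unfolding u_def by simp
  define s where "s = exp (- u)"
  define a where "a = (1-2*s)/((1-s)*(1+4*s))"
  define b where "b = 1/((1-s)*(1+4*s))"
  define Nw where "Nw = {N, Suc N, N+2, N+3, N+4}"
  define Y where "Y = X \<union> Nw"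
  define e where "e = eY X d x0 N u"
  have s1: "s < 1" and s0: "0 < s" using u unfolding s_def by auto
  have me: "is_metric_on Y e" unfolding Y_def e_def by (rule eY_metric[OF mX x0 u])
  have fY: "finite Y" using fX unfolding Y_def Nw_def by simp
  have fmY: "fin_metric_space Y e" unfolding fin_metric_space_def using fY me neX unfolding Y_def by auto
  note YW = Y_weighting[OF fm w x0 u NX, folded s_def, folded a_def b_def, folded Nw_def, folded Y_def e_def]
  have hm: "has_magnitude Y e" unfolding has_magnitude_def using YW(1) by blast
  have sym: "\<forall>x\<in>Y. \<forall>y\<in>Y. e x y = e y x" using me unfolding is_metric_on_def by blast
  have magY: "magnitude Y e = sum w X + 6/(1+4*s) - 1"
    using magnitude_eq[OF fY YW(1) sym] YW(2) by simp
  have d00: "\<And>x. x \<in> X \<Longrightarrow> d x x = 0" using mX unfolding is_metric_on_def by blast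
  have close: "\<forall>y\<in>Y. \<exists>x\<in>X. e x y \<le> u"
  proof
    fix y assume "y \<in> Y"
    then consider "y \<in> X" | "y \<in> Nw \<and> y \<notin> X" unfolding Y_def by blast
    then show "\<exists>x\<in>X. e x y \<le> u"
    proof cases
      case 1 then show ?thesis using d00 u by (intro bexI[of _ y]) (auto simp: e_def eY_def)
    next
      case 2 then show ?thesis using d00[OF x0] x0 by (intro bexI[of _ x0]) (auto simp: e_def eY_def)
    qed
  qed
  have gh: "gh_dist X d Y e \<le> u + u"
    by (rule gh_le[OF fm fY me _ _ close u]) (auto simp: Y_def e_def eY_def less_imp_le[OF u])
  have "gh_dist X d Y e < \<delta>" using gh dpos unfolding u_def by simp
  then have "\<bar>magnitude Y e - magnitude X d\<bar> < 1/5" using Hd fmY hm by blast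
  then have "\<bar>6/(1+4*s) - 1\<bar> < 1/5" unfolding magY magX by simp
  then have "6/(1+4*s) - 1 < 1/5" by linarith
  moreover have "6/(1+4*s) > 6/5" using s0 s1 by (simp add: field_simps)
  ultimately show False by simp
qed

end
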